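(* Assume A or B, let $e\in E_H$, and let $\lambda>0$ satisfy $\mathbb{P}(\omega_e\ge\lambda)>0$. If $A\subset\Omega_H$ is $e$-increasing with $\mathbb{P}(A)>0$, then $\mathbb{P}(A\cap\{\omega_e\ge\lambda\})>0$.
   Context: $V_H=\{(x_1,x_2)\in\mathbb{Z}^2:x_2\ge0\}$, $E_H$ its nearest-neighbour edges, $\Omega_H=[0,\infty)^{E_H}$; write $\omega=(\omega_e,\check\omega)$ with $\check\omega=(\omega_f)_{f\ne e}$. An event $A\subset\Omega_H$ is $e$-increasing if $(\omega_e,\check\omega)\in A$ and $r>0$ imply $(\omega_e+r,\check\omega)\in A$. A probability measure on $[0,\infty)^{E'}$ has the upward finite energy property if for each $e\in E'$ and $\lambda$ with $\mathbb{P}(\omega_e\ge\lambda)>0$, $\mathbb{P}(\omega_e\ge\lambda\mid\check\omega)>0$ almost surely. Assumption A: $\mathbb{P}$ is a product measure on $\Omega_H$ with i.i.d. continuous marginals. Assumption B: $\mathbb{P}$ is the restriction to $E_H$ of a measure $\hat{\mathbb{P}}$ on $[0,\infty)^{\mathcal{E}^2}$ with the upward finite energy property that is ergodic under $\mathbb{Z}^2$-translations, invariant under all symmetries of $\mathbb{Z}^2$, has $\int\omega_e^{2+\alpha}d\hat{\mathbb{P}}<\infty$ for some $\alpha>0$, unique passage times, and bounded limit shape. *)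

theory Defs
  imports "HOL-Probability.Probability"
begin

type_synonym vertex = "int \<times> int"
type_synonym edge = "vertex set"
type_synonym config = "edge \<Rightarrow> real"

definition adj :: "vertex \<Rightarrow> vertex \<Rightarrow> bool" where
  "adj x y \<longleftrightarrow> \<bar>fst x - fst y\<bar> + \<bar>snd x - snd y\<bar> = 1"

definition E2 :: "edge set" where
  "E2 = {{x, y} | x y. adj x y}"

definition EH :: "edge set" where
  "EH = {{x, y} | x y. adj x y \<and> snd x \<ge> 0 \<and> snd y \<ge> 0}"

definition OmegaH :: "config set" where
  "OmegaH = (\<Pi>\<^sub>E f\<in>EH. {0..})"

definition e_increasing :: "edge \<Rightarrow> config set \<Rightarrow> bool" where
  "e_increasing e A \<longleftrightarrow> (\<forall>\<omega>\<in>A. \<forall>r>0. fun_upd \<omega> e (\<omega> e + r) \<in> A)"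

definition upward_finite_energy :: "edge set \<Rightarrow> config measure \<Rightarrow> bool" where
  "upward_finite_energy E' Q \<longleftrightarrow>
     (\<forall>e\<in>E'. \<forall>lam::real. measure Q {\<omega>\<in>space Q. \<omega> e \<ge> lam} > 0 \<longrightarrow>
        (AE \<omega> in Q. real_cond_exp Q
            (vimage_algebra (space Q) (\<lambda>\<omega>. restrict \<omega> (E' - {e})) (\<Pi>\<^sub>M f\<in>E' - {e}. borel))
            (indicator {\<omega>\<in>space Q. \<omega> e \<ge> lam}) \<omega> > 0))"

definition assmA :: "config measure \<Rightarrow> bool" where
  "assmA P \<longleftrightarrow> (\<exists>\<nu>::real measure. prob_space \<nu> \<and> sets \<nu> = sets borel \<and>
      emeasure \<nu> {0..} = 1 \<and> (\<forall>x. emeasure \<nu> {x} = 0) \<and>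
      P = (\<Pi>\<^sub>M f\<in>EH. \<nu>))"

definition act :: "(vertex \<Rightarrow> vertex) \<Rightarrow> config \<Rightarrow> config" where
  "act \<sigma> \<omega> = restrict (\<lambda>f. \<omega> (\<sigma> ` f)) E2"

definition vshift :: "vertex \<Rightarrow> vertex \<Rightarrow> vertex" where
  "vshift v x = (fst x + fst v, snd x + snd v)"

definition lattice_sym :: "(vertex \<Rightarrow> vertex) \<Rightarrow> bool" where
  "lattice_sym \<sigma> \<longleftrightarrow> bij \<sigma> \<and> (\<forall>x y. adj x y \<longleftrightarrow> adj (\<sigma> x) (\<sigma> y))"

definition ergodic_translations :: "config measure \<Rightarrow> bool" where
  "ergodic_translations Q \<longleftrightarrow>
     (\<forall>B\<in>sets Q. (\<forall>v. act (vshift v) -` B \<inter> space Q = B) \<longrightarrow>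
        measure Q B = 0 \<or> measure Q B = 1)"

definition symmetry_invariant :: "config measure \<Rightarrow> bool" where
  "symmetry_invariant Q \<longleftrightarrow>
     (\<forall>\<sigma>. lattice_sym \<sigma> \<longrightarrow> distr Q (\<Pi>\<^sub>M f\<in>E2. borel) (act \<sigma>) = Q)"

definition moment_cond :: "config measure \<Rightarrow> bool" where
  "moment_cond Q \<longleftrightarrow> (\<exists>\<alpha>>0. \<forall>e\<in>E2.
      (\<integral>\<^sup>+ \<omega>. ennreal (\<bar>\<omega> e\<bar> powr (2 + \<alpha>)) \<partial>Q) < \<infinity>)"

definition is_path :: "vertex list \<Rightarrow> bool" where
  "is_path xs \<longleftrightarrow> xs \<noteq> [] \<and> (\<forall>i. Suc i < length xs \<longrightarrow> adj (xs ! i) (xs ! Suc i))"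

definition path_edges :: "vertex list \<Rightarrow> edge set" where
  "path_edges xs = (\<lambda>i. {xs ! i, xs ! Suc i}) ` {..<length xs - 1}"

definition path_weight :: "config \<Rightarrow> vertex list \<Rightarrow> real" where
  "path_weight \<omega> xs = (\<Sum>i<length xs - 1. \<omega> {xs ! i, xs ! Suc i})"

definition passage_time :: "config \<Rightarrow> vertex \<Rightarrow> vertex \<Rightarrow> real" where
  "passage_time \<omega> x y =
     (INF xs\<in>{xs. is_path xs \<and> hd xs = x \<and> last xs = y}. path_weight \<omega> xs)"

definition unique_passage_times :: "config measure \<Rightarrow> bool" where
  "unique_passage_times Q \<longleftrightarrow>
     (AE \<omega> in Q. \<forall>xs ys. is_path xs \<and> distinct xs \<and> is_path ys \<and> distinct ys \<and>
         path_edges xs \<noteq> path_edges ys \<longrightarrow>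
         (\<Sum>f\<in>path_edges xs. \<omega> f) \<noteq> (\<Sum>f\<in>path_edges ys. \<omega> f))"

text \<open>Bounded limit shape: the time constant g(x) = lim T(0,nx)/n (a.s.) satisfies
  g(x) \<ge> c |x| for some c > 0, i.e. {g \<le> 1} is bounded.\<close>
definition bounded_limit_shape :: "config measure \<Rightarrow> bool" where
  "bounded_limit_shape Q \<longleftrightarrow>
     (\<exists>c>0. \<forall>x::vertex. \<exists>g::real.
        (AE \<omega> in Q. (\<lambda>n. passage_time \<omega> (0, 0) (int n * fst x, int n * snd x) / real n)
                        \<longlonglongrightarrow> g) \<and>
        g \<ge> c * (\<bar>real_of_int (fst x)\<bar> + \<bar>real_of_int (snd x)\<bar>))"

definition assmB :: "config measure \<Rightarrow> bool" where
  "assmB P \<longleftrightarrow> (\<exists>Q. prob_space Q \<and> sets Q = sets (\<Pi>\<^sub>M f\<in>E2. (borel :: real measure)) \<and>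
      (AE \<omega> in Q. \<forall>f\<in>E2. 0 \<le> \<omega> f) \<and>
      upward_finite_energy E2 Q \<and> ergodic_translations Q \<and> symmetry_invariant Q \<and>
      moment_cond Q \<and> unique_passage_times Q \<and> bounded_limit_shape Q \<and>
      P = distr Q (\<Pi>\<^sub>M f\<in>EH. borel) (\<lambda>\<omega>. restrict \<omega> EH))"

end

theory Submission
  imports Defs
begin

lemma generic:
  fixes M :: "config measure"
  assumes ps: "prob_space M" and A: "A \<in> sets M"
    and inc: "\<And>\<omega> r. \<omega> \<in> A \<Longrightarrow> r > 0 \<Longrightarrow> fun_upd \<omega> e (\<omega> e + r) \<in> A"
    and B: "B = {\<omega> \<in> space M. \<omega> e \<ge> lam}" "B \<in> sets M"
    and E: "E = {\<omega> \<in> space M. fun_upd \<omega> e lam \<in> A}" "E \<in> sets M"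
    and pos: "measure M A > 0"
    and key: "measure M E > 0 \<Longrightarrow> measure M (E \<inter> B) > 0"
  shows "measure M (A \<inter> B) > 0"
proof (rule ccontr)
  interpret prob_space M by fact
  assume "\<not> ?thesis"
  hence z: "measure M (A \<inter> B) = 0" using measure_nonneg[of M "A \<inter> B"] by linarith
  have AsM: "A \<subseteq> space M" using A sets.sets_into_space by blast
  have sub1: "A - B \<subseteq> E"
  proof
    fix \<omega> assume w: "\<omega> \<in> A - B"
    hence "\<omega> e < lam" "\<omega> \<in> space M" using B AsM by auto
    hence "fun_upd \<omega> e (\<omega> e + (lam - \<omega> e)) \<in> A" using inc[of \<omega> "lam - \<omega> e"] w by auto
    thus "\<omega> \<in> E" using E \<open>\<omega> \<in> space M\<close> by simp
  qed
  have sub2: "E \<inter> B \<subseteq> A \<inter> B"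
  proof
    fix \<omega> assume w: "\<omega> \<in> E \<inter> B"
    hence h: "fun_upd \<omega> e lam \<in> A" "\<omega> e \<ge> lam" using E B by auto
    have "\<omega> \<in> A"
    proof (cases "\<omega> e = lam")
      case True thus ?thesis using h by (metis fun_upd_triv)
    next
      case False
      hence "fun_upd (fun_upd \<omega> e lam) e ((fun_upd \<omega> e lam) e + (\<omega> e - lam)) \<in> A"
        using inc[OF h(1), of "\<omega> e - lam"] h(2) by simp
      thus ?thesis by simp
    qed
    thus "\<omega> \<in> A \<inter> B" using w by auto
  qed
  have "measure M A \<le> measure M (A \<inter> B) + measure M (A - B)"
    using finite_measure_Diff'[OF A B(2)] by simp
  also have "\<dots> \<le> measure M E" using z finite_measure_mono[OF sub1 E(2)] by simp
  finally have "measure M E > 0" using pos by linarith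
  hence "measure M (E \<inter> B) > 0" by (rule key)
  moreover have "measure M (E \<inter> B) \<le> measure M (A \<inter> B)"
    using finite_measure_mono[OF sub2] A B by auto
  ultimately show False using z by linarith
qed


lemma EH_sub_E2: "EH \<subseteq> E2"
  unfolding EH_def E2_def by blast

lemma caseB:
  fixes P :: "config measure" and e :: edge and lam :: real and A :: "config set"
  assumes "assmB P" and eH: "e \<in> EH"
    and posB: "measure P {\<omega> \<in> space P. \<omega> e \<ge> lam} > 0"
    and AP: "A \<in> sets P"
    and inc: "e_increasing e A"
    and posA: "measure P A > 0"
  shows "measure P (A \<inter> {\<omega> \<in> space P. \<omega> e \<ge> lam}) > 0"
proof -
  obtain Q where ps: "prob_space Q" and sQ: "sets Q = sets (\<Pi>\<^sub>M f\<in>E2. (borel :: real measure))"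
    and ufe: "upward_finite_energy E2 Q"
    and Pdef: "P = distr Q (\<Pi>\<^sub>M f\<in>EH. borel) (\<lambda>\<omega>. restrict \<omega> EH)"
    using assms(1) unfolding assmB_def by blast
  interpret prob_space Q by fact
  have e2: "e \<in> E2" using eH EH_sub_E2 by blast
  have spQ: "space Q = space (\<Pi>\<^sub>M f\<in>E2. (borel :: real measure))"
    using sQ by (rule sets_eq_imp_space_eq)
  define R where "R = (\<lambda>\<omega>::config. restrict \<omega> EH)"
  have Rm: "R \<in> measurable Q (\<Pi>\<^sub>M f\<in>EH. borel)"
    unfolding R_def using measurable_restrict_subset[OF EH_sub_E2, of "\<lambda>_. borel"]
    by (subst measurable_cong_sets[OF sQ refl])
  have sP: "sets P = sets (\<Pi>\<^sub>M f\<in>EH. (borel :: real measure))" and spP: "space P = space (\<Pi>\<^sub>M f\<in>EH. (borel :: real measure))"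
    using Pdef by auto
  have mP: "measure P X = measure Q (R -` X \<inter> space Q)" if "X \<in> sets P" for X
    using that Pdef Rm by (simp add: measure_distr R_def)
  define A' where "A' = R -` A \<inter> space Q"
  define B' where "B' = {\<omega> \<in> space Q. \<omega> e \<ge> lam}"
  define E' where "E' = {\<omega> \<in> space Q. fun_upd \<omega> e lam \<in> A'}"
  have compm: "(\<lambda>\<omega>::config. \<omega> e) \<in> borel_measurable Q"
    using measurable_component_singleton[OF e2, of "\<lambda>_. borel"]
    by (subst measurable_cong_sets[OF sQ refl])
  have B'm: "B' \<in> sets Q"
    unfolding B'_def using compm by measurable
  have A'm: "A' \<in> sets Q" unfolding A'_def using Rm AP sP by (simp add: measurable_sets)
  have Rsp: "R \<omega> \<in> space P" if "\<omega> \<in> space Q" for \<omega>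
    using measurable_space[OF Rm that] spP by simp
  have BPm: "{\<omega> \<in> space P. \<omega> e \<ge> lam} \<in> sets P"
  proof -
    have "(\<lambda>\<omega>::config. \<omega> e) \<in> borel_measurable P"
      using measurable_component_singleton[OF eH, of "\<lambda>_. borel"]
      by (subst measurable_cong_sets[OF sP refl])
    thus ?thesis by measurable
  qed
  have Re: "R \<omega> e = \<omega> e" for \<omega> unfolding R_def using eH by simp
  have eq1: "R -` (A \<inter> {\<omega> \<in> space P. \<omega> e \<ge> lam}) \<inter> space Q = A' \<inter> B'"
    unfolding A'_def B'_def using Rsp Re by auto
  have eq2: "R -` {\<omega> \<in> space P. \<omega> e \<ge> lam} \<inter> space Q = B'"
    unfolding B'_def using Rsp Re by auto
  have posB': "measure Q B' > 0" using posB mP[OF BPm] eq2 by simp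
  have posA': "measure Q A' > 0" using posA mP[OF AP] A'_def by simp
  define H where "H = (\<lambda>\<omega>::config. restrict \<omega> (E2 - {e}))"
  define F where "F = vimage_algebra (space Q) H (\<Pi>\<^sub>M f\<in>E2 - {e}. (borel :: real measure))"
  have Hm: "H \<in> measurable Q (\<Pi>\<^sub>M f\<in>E2 - {e}. borel)"
    unfolding H_def using measurable_restrict_subset[of "E2 - {e}" E2 "\<lambda>_. borel"]
    by (subst measurable_cong_sets[OF sQ refl]) auto
  have subalg: "subalgebra Q F"
    unfolding subalgebra_def F_def using sets_image_in_sets[OF refl Hm] by simp
  interpret fms: finite_measure_subalgebra Q F
    by unfold_locales (rule subalg)
  define g where "g = (\<lambda>\<eta>::config. R (fun_upd \<eta> e lam))"
  have gm: "g \<in> measurable (\<Pi>\<^sub>M f\<in>E2 - {e}. borel) (\<Pi>\<^sub>M f\<in>EH. borel)"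
  proof -
    have "(\<lambda>\<eta>::config. fun_upd (id \<eta>) e lam) \<in> measurable (\<Pi>\<^sub>M f\<in>E2 - {e}. (borel::real measure)) (\<Pi>\<^sub>M f\<in>E2. borel)"
      by (rule measurable_fun_upd[where J="E2 - {e}"]) (use e2 in auto)
    hence "(\<lambda>\<eta>::config. fun_upd \<eta> e lam) \<in> measurable (\<Pi>\<^sub>M f\<in>E2 - {e}. (borel::real measure)) (\<Pi>\<^sub>M f\<in>E2. borel)"
      by simp
    from measurable_comp[OF this measurable_restrict_subset[OF EH_sub_E2, of "\<lambda>_. borel"]]
    show ?thesis unfolding g_def R_def by (simp add: comp_def)
  qed
  define G where "G = g -` A \<inter> space (\<Pi>\<^sub>M f\<in>E2 - {e}. (borel :: real measure))"
  have Gm: "G \<in> sets (\<Pi>\<^sub>M f\<in>E2 - {e}. (borel :: real measure))"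
    unfolding G_def using gm AP sP by (simp add: measurable_sets)
  have Hsp: "H \<omega> \<in> space (\<Pi>\<^sub>M f\<in>E2 - {e}. (borel :: real measure))" if "\<omega> \<in> space Q" for \<omega>
    using measurable_space[OF Hm that] .
  have updsp: "fun_upd \<omega> e lam \<in> space Q" if "\<omega> \<in> space Q" for \<omega>
    using that e2 unfolding spQ by (auto simp: space_PiM PiE_iff extensional_def)
  have Rupd: "R (fun_upd \<omega> e lam) = g (H \<omega>)" for \<omega>
    unfolding R_def g_def H_def using EH_sub_E2 by (auto simp: fun_eq_iff)
  have E'eq: "E' = H -` G \<inter> space Q"
    unfolding E'_def A'_def G_def using updsp Hsp Rupd by auto
  have E'F: "E' \<in> sets F" unfolding E'eq F_def by (rule in_vimage_algebra[OF Gm])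
  have E'm: "E' \<in> sets Q" using E'F subalg unfolding subalgebra_def by blast
  have A'inc: "fun_upd \<omega> e (\<omega> e + r) \<in> A'" if "\<omega> \<in> A'" "r > 0" for \<omega> r
  proof -
    have w: "\<omega> \<in> space Q" "R \<omega> \<in> A" using that unfolding A'_def by auto
    have "fun_upd (R \<omega>) e (R \<omega> e + r) \<in> A" using inc w(2) that(2) unfolding e_increasing_def by blast
    moreover have "R (fun_upd \<omega> e (\<omega> e + r)) = fun_upd (R \<omega>) e (R \<omega> e + r)"
      unfolding R_def using eH by (auto simp: fun_eq_iff)
    moreover have "fun_upd \<omega> e (\<omega> e + r) \<in> space Q"
      using w(1) e2 unfolding spQ by (auto simp: space_PiM PiE_iff extensional_def)
    ultimately show ?thesis unfolding A'_def by auto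
  qed
  define c where "c = real_cond_exp Q F (indicator B')"
  have cpos: "AE \<omega> in Q. c \<omega> > 0"
    using ufe e2 posB' unfolding upward_finite_energy_def c_def B'_def F_def H_def by blast
  have key: "measure Q (E' \<inter> B') > 0" if "measure Q E' > 0"
  proof -
    have intB: "integrable Q (indicator B' :: config \<Rightarrow> real)"
      by (rule integrable_real_indicator[OF B'm]) (simp add: less_top[symmetric])
    have ci: "integrable Q c" unfolding c_def using fms.real_cond_exp_int(1)[OF intB] .
    have eq: "(\<integral>x \<in> E'. indicator B' x \<partial>Q) = (\<integral>x \<in> E'. c x \<partial>Q)"
      unfolding c_def by (rule fms.real_cond_exp_intA[OF intB E'F])
    have lhs: "(\<integral>x \<in> E'. indicator B' x \<partial>Q) = measure Q (E' \<inter> B')"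
      unfolding set_lebesgue_integral_def
      using E'm B'm by (simp add: indicator_inter_arith[symmetric])
    have fi: "integrable Q (\<lambda>x. indicator E' x * c x)"
      using integrable_mult_indicator[OF E'm ci] by simp
    have fnn: "AE x in Q. 0 \<le> indicator E' x * c x"
      using cpos by eventually_elim simp
    have "(\<integral>x. indicator E' x * c x \<partial>Q) \<noteq> 0"
    proof
      assume "(\<integral>x. indicator E' x * c x \<partial>Q) = 0"
      hence "AE x in Q. indicator E' x * c x = 0"
        using integral_nonneg_eq_0_iff_AE[OF fi fnn] by simp
      hence "AE x in Q. x \<notin> E'" using cpos by eventually_elim (auto split: split_indicator)
      hence "emeasure Q E' = 0"
        using AE_iff_measurable[OF E'm, of "\<lambda>x. x \<notin> E'"] E'm sets.sets_into_space by blast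
      thus False using that by (simp add: measure_def)
    qed
    moreover have "(\<integral>x. indicator E' x * c x \<partial>Q) \<ge> 0"
      using integral_nonneg_AE[OF fnn] .
    ultimately have "(\<integral>x. indicator E' x * c x \<partial>Q) > 0" by linarith
    thus ?thesis using eq lhs unfolding set_lebesgue_integral_def by simp
  qed
  have "measure Q (A' \<inter> B') > 0"
    by (rule generic[OF ps A'm A'inc B'_def B'm E'_def E'm posA' key])
  thus ?thesis using mP BPm AP eq1 by (simp add: sets.Int)
qed
lemma caseA:
  fixes P :: "config measure" and e :: edge and lam :: real and A :: "config set"
  assumes "assmA P" and eH: "e \<in> EH"
    and posB: "measure P {\<omega> \<in> space P. \<omega> e \<ge> lam} > 0"
    and AP: "A \<in> sets P"
    and inc: "e_increasing e A"
    and posA: "measure P A > 0"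
  shows "measure P (A \<inter> {\<omega> \<in> space P. \<omega> e \<ge> lam}) > 0"
proof -
  obtain \<nu> :: "real measure" where pn: "prob_space \<nu>" and sn: "sets \<nu> = sets borel"
    and Pdef: "P = (\<Pi>\<^sub>M f\<in>EH. \<nu>)"
    using assms(1) unfolding assmA_def by blast
  interpret nu: prob_space \<nu> by fact
  have spn: "space \<nu> = UNIV" using sets_eq_imp_space_eq[OF sn] by simp
  define I where "I = EH - {e}"
  define N where "N = (\<Pi>\<^sub>M f\<in>I. \<nu>)"
  have EHI: "EH = insert e I" unfolding I_def using eH by blast
  interpret NN: prob_space N unfolding N_def by (rule prob_space_PiM) (rule pn)
  interpret pp: pair_prob_space \<nu> N by unfold_locales
  interpret PP: prob_space P unfolding Pdef by (rule prob_space_PiM) (rule pn)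
  define T where "T = (\<lambda>(x::real, X::config). X(e := x))"
  have Pd: "P = distr (\<nu> \<Otimes>\<^sub>M N) P T"
    unfolding Pdef EHI N_def T_def
    by (rule distr_pair_PiM_eq_PiM[symmetric]) (auto intro: pn)
  have Tm: "T \<in> measurable (\<nu> \<Otimes>\<^sub>M N) P"
  proof -
    have "(\<lambda>z::real \<times> config. (snd z)(e := fst z)) \<in> measurable (\<nu> \<Otimes>\<^sub>M N) P"
      unfolding Pdef EHI N_def
      by (rule measurable_fun_upd[where J=I]) auto
    moreover have "T = (\<lambda>z::real \<times> config. (snd z)(e := fst z))"
      unfolding T_def by (auto simp: fun_eq_iff split: prod.split)
    ultimately show ?thesis by simp
  qed
  have mP: "measure P S = measure (\<nu> \<Otimes>\<^sub>M N) (T -` S \<inter> space (\<nu> \<Otimes>\<^sub>M N))" if "S \<in> sets P" for S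
  proof -
    have "measure (distr (\<nu> \<Otimes>\<^sub>M N) P T) S = measure (\<nu> \<Otimes>\<^sub>M N) (T -` S \<inter> space (\<nu> \<Otimes>\<^sub>M N))"
      using that by (intro measure_distr[OF Tm]) simp
    thus ?thesis using Pd by metis
  qed
  have spP: "space P = space (\<Pi>\<^sub>M f\<in>EH. \<nu>)" using Pdef by simp
  have Tsp: "T z \<in> space P" if "z \<in> space (\<nu> \<Otimes>\<^sub>M N)" for z
    using measurable_space[OF Tm that] .
  have Te: "T z e = fst z" for z unfolding T_def by (auto split: prod.split)
  have Tupd: "fun_upd (T z) e lam = fun_upd (snd z) e lam" for z unfolding T_def by (auto split: prod.split)
  define B where "B = {\<omega> \<in> space P. \<omega> e \<ge> lam}"
  define E where "E = {\<omega> \<in> space P. fun_upd \<omega> e lam \<in> A}"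
  define S' where "S' = {X \<in> space N. fun_upd X e lam \<in> A}"
  have compm: "(\<lambda>\<omega>::config. \<omega> e) \<in> borel_measurable P"
    unfolding Pdef using measurable_component_singleton[OF eH, of "\<lambda>_. \<nu>"]
    by (subst measurable_cong_sets[OF refl sn[symmetric]])
  have Bm: "B \<in> sets P" unfolding B_def using compm by measurable
  have updm: "(\<lambda>\<omega>::config. fun_upd (id \<omega>) e lam) \<in> measurable P P"
    unfolding Pdef by (rule measurable_fun_upd[where J=EH]) (use eH spn in auto)
  have Em: "E \<in> sets P"
  proof -
    have "E = (\<lambda>\<omega>. fun_upd (id \<omega>) e lam) -` A \<inter> space P" unfolding E_def by auto
    thus ?thesis using measurable_sets[OF updm AP] by simp
  qed
  have updmN: "(\<lambda>X::config. fun_upd (id X) e lam) \<in> measurable N P"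
    unfolding Pdef N_def EHI by (rule measurable_fun_upd[where J=I]) (use spn in auto)
  have S'm: "S' \<in> sets N"
  proof -
    have "S' = (\<lambda>X. fun_upd (id X) e lam) -` A \<inter> space N" unfolding S'_def by auto
    thus ?thesis using measurable_sets[OF updmN AP] by simp
  qed
  have Lm: "{lam..} \<in> sets \<nu>" using sn by simp
  have spPair: "space (\<nu> \<Otimes>\<^sub>M N) = UNIV \<times> space N" by (simp add: space_pair_measure spn)
  have pre1: "T -` (E \<inter> B) \<inter> space (\<nu> \<Otimes>\<^sub>M N) = {lam..} \<times> S'"
    unfolding E_def B_def S'_def spPair using Tsp Te Tupd spPair by auto
  have pre2: "T -` E \<inter> space (\<nu> \<Otimes>\<^sub>M N) = space \<nu> \<times> S'"
    unfolding E_def S'_def spPair using Tsp Tupd spPair spn by auto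
  have pre3: "T -` B \<inter> space (\<nu> \<Otimes>\<^sub>M N) = {lam..} \<times> space N"
    unfolding B_def spPair using Tsp Te spPair by auto
  have mT: "measure (\<nu> \<Otimes>\<^sub>M N) (X \<times> Y) = measure \<nu> X * measure N Y"
    if "X \<in> sets \<nu>" "Y \<in> sets N" for X Y
    using NN.emeasure_pair_measure_Times[OF that]
    by (simp add: measure_def enn2real_mult)
  have key: "measure P (E \<inter> B) > 0" if "measure P E > 0"
  proof -
    have e1: "measure P (E \<inter> B) = measure \<nu> {lam..} * measure N S'"
      using mP[of "E \<inter> B"] Em Bm pre1 mT[OF Lm S'm] by simp
    have e2: "measure P E = measure N S'"
      using mP[of E] Em pre2 mT[OF sets.top[of \<nu>] S'm] nu.prob_space by simp
    have e3: "measure P B = measure \<nu> {lam..}"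
      using mP[of B] Bm pre3 mT[OF Lm sets.top[of N]] NN.prob_space by simp
    show ?thesis using e1 e2 e3 that posB unfolding B_def by simp
  qed
  have incA: "\<And>\<omega> r. \<omega> \<in> A \<Longrightarrow> r > 0 \<Longrightarrow> fun_upd \<omega> e (\<omega> e + r) \<in> A"
    using inc unfolding e_increasing_def by blast
  have "measure P (A \<inter> B) > 0"
    by (rule generic[OF PP.prob_space_axioms AP incA B_def Bm E_def Em posA key])
  thus ?thesis unfolding B_def .
qed

theorem lemma4p6:
  fixes P :: "config measure" and e :: edge and lam :: real and A :: "config set"
  assumes "assmA P \<or> assmB P"
    and "e \<in> EH"
    and "lam > 0"
    and "measure P {\<omega> \<in> space P. \<omega> e \<ge> lam} > 0"
    and "A \<in> sets P" and "A \<subseteq> OmegaH"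
    and "e_increasing e A"
    and "measure P A > 0"
  shows "measure P (A \<inter> {\<omega> \<in> space P. \<omega> e \<ge> lam}) > 0"
  using assms(1) caseA[OF _ assms(2,4,5,7,8)] caseB[OF _ assms(2,4,5,7,8)] by blast

end
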